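(* Let $c\geq 1$ be a real number and let $G$ be a finite graph whose growth satisfies $f_G(r)\leq cr$ for every positive integer $r$. Then $\operatorname{sep}_{1-\frac{1}{4c}}(G) < 2c$.
   Context: All graphs are finite. The growth of $G$ is the function $f_G\colon\mathbb{N}\to\mathbb{N}$ where $f_G(r)$ is the maximum of $|V(H)|$ over all subgraphs $H$ of $G$ of radius at most $r$. A separation of a graph $H$ is a pair $(A,B)$ of subsets of $V(H)$ with $A\cup B = V(H)$ such that no edge of $H$ has one end in $A\setminus B$ and the other in $B\setminus A$; its order is $|A\cap B|$. For $\alpha\in[\frac23,1)$, a separation $(A,B)$ of an $n$-vertex graph is $\alpha$-balanced if $|A\setminus B|\leq \alpha n$ and $|B\setminus A|\leq\alpha n$. The $\alpha$-separation number $\operatorname{sep}_\alpha(G)$ is the smallest integer $s$ such that every subgraph of $G$ has an $\alpha$-balanced separation of order at most $s$. *)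

theory Defs
  imports Complex_Main
begin

definition graph :: "'a set \<Rightarrow> ('a \<Rightarrow> 'a \<Rightarrow> bool) \<Rightarrow> bool" where
  "graph V E \<longleftrightarrow> finite V \<and> (\<forall>x y. E x y \<longrightarrow> x \<in> V \<and> y \<in> V \<and> x \<noteq> y \<and> E y x)"

definition subgraph :: "'a set \<Rightarrow> ('a \<Rightarrow> 'a \<Rightarrow> bool) \<Rightarrow> 'a set \<Rightarrow> ('a \<Rightarrow> 'a \<Rightarrow> bool) \<Rightarrow> bool" where
  "subgraph V' E' V E \<longleftrightarrow> graph V' E' \<and> V' \<subseteq> V \<and> (\<forall>x y. E' x y \<longrightarrow> E x y)"

definition dist_le :: "('a \<Rightarrow> 'a \<Rightarrow> bool) \<Rightarrow> 'a \<Rightarrow> 'a \<Rightarrow> nat \<Rightarrow> bool" where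
  "dist_le E v u r \<longleftrightarrow> (\<exists>k\<le>r. (v, u) \<in> {(x, y). E x y} ^^ k)"

definition radius_le :: "'a set \<Rightarrow> ('a \<Rightarrow> 'a \<Rightarrow> bool) \<Rightarrow> nat \<Rightarrow> bool" where
  "radius_le V E r \<longleftrightarrow> (\<exists>v\<in>V. \<forall>u\<in>V. dist_le E v u r)"

definition growth :: "'a set \<Rightarrow> ('a \<Rightarrow> 'a \<Rightarrow> bool) \<Rightarrow> nat \<Rightarrow> nat" where
  "growth V E r = Max (insert 0 {card V' | V' E'. subgraph V' E' V E \<and> radius_le V' E' r})"

definition separation :: "'a set \<Rightarrow> ('a \<Rightarrow> 'a \<Rightarrow> bool) \<Rightarrow> 'a set \<Rightarrow> 'a set \<Rightarrow> bool" where
  "separation V E A B \<longleftrightarrow> A \<union> B = V \<and>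
     (\<forall>x y. E x y \<longrightarrow> \<not> (x \<in> A - B \<and> y \<in> B - A))"

definition balanced :: "real \<Rightarrow> 'a set \<Rightarrow> 'a set \<Rightarrow> 'a set \<Rightarrow> bool" where
  "balanced \<alpha> V A B \<longleftrightarrow> real (card (A - B)) \<le> \<alpha> * real (card V) \<and>
                          real (card (B - A)) \<le> \<alpha> * real (card V)"

definition sep_num :: "real \<Rightarrow> 'a set \<Rightarrow> ('a \<Rightarrow> 'a \<Rightarrow> bool) \<Rightarrow> nat" where
  "sep_num \<alpha> V E = (LEAST s. \<forall>V' E'. subgraph V' E' V E \<longrightarrow>
      (\<exists>A B. separation V' E' A B \<and> balanced \<alpha> V' A B \<and> card (A \<inter> B) \<le> s))"

end

theory Submission
  imports Defs
begin

definition bll :: "('a \<Rightarrow> 'a \<Rightarrow> bool) \<Rightarrow> 'a \<Rightarrow> nat \<Rightarrow> 'a set" where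
  "bll E v j = {u. \<exists>k<j. (v, u) \<in> {(x, y). E x y} ^^ k}"

definition closedset :: "('a \<Rightarrow> 'a \<Rightarrow> bool) \<Rightarrow> 'a set \<Rightarrow> bool" where
  "closedset E W \<longleftrightarrow> (\<forall>x y. E x y \<longrightarrow> (x \<in> W \<longleftrightarrow> y \<in> W))"

lemma bll_0: "bll E v 0 = {}"
  by (simp add: bll_def)

lemma bll_1: "bll E v (Suc 0) = {v}"
  by (auto simp: bll_def)

lemma bll_mono: "j \<le> j' \<Longrightarrow> bll E v j \<subseteq> bll E v j'"
  unfolding bll_def by (auto intro: less_le_trans)

lemma walk_in: "graph V E \<Longrightarrow> v \<in> V \<Longrightarrow> (v, u) \<in> {(x, y). E x y} ^^ k \<Longrightarrow> u \<in> V"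
proof (induction k arbitrary: u)
  case 0 then show ?case by simp
next
  case (Suc k)
  then obtain w where "(v, w) \<in> {(x, y). E x y} ^^ k" "E w u" by auto
  then show ?case using Suc.prems(1) unfolding graph_def by blast
qed

lemma bll_sub: "graph V E \<Longrightarrow> v \<in> V \<Longrightarrow> bll E v j \<subseteq> V"
  unfolding bll_def using walk_in by fast

lemma bll_step: "u \<in> bll E v j \<Longrightarrow> E u w \<Longrightarrow> w \<in> bll E v (Suc j)"
  unfolding bll_def by fastforce

lemma bll_closed: "graph V E \<Longrightarrow> bll E v (Suc j) = bll E v j \<Longrightarrow> closedset E (bll E v j)"
  unfolding closedset_def
proof (intro allI impI iffI)
  fix x y assume g: "graph V E" and eq: "bll E v (Suc j) = bll E v j" and e: "E x y"
  { assume "x \<in> bll E v j" then show "y \<in> bll E v j" using bll_step[where E=E and u=x and w=y] e eq by blast }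
  { assume "y \<in> bll E v j"
    moreover have "E y x" using g e unfolding graph_def by blast
    ultimately show "x \<in> bll E v j" using bll_step[where E=E and u=y and w=x] eq by blast }
qed

lemma walk_out: "closedset E W \<Longrightarrow> v \<notin> W \<Longrightarrow> (v, u) \<in> {(x, y). E x y} ^^ k \<Longrightarrow> u \<notin> W"
proof (induction k arbitrary: u)
  case 0 then show ?case by simp
next
  case (Suc k)
  then obtain w where "(v, w) \<in> {(x, y). E x y} ^^ k" "E w u" by auto
  then show ?case using Suc unfolding closedset_def by blast
qed

lemma bll_disj: "closedset E W \<Longrightarrow> v \<notin> W \<Longrightarrow> bll E v j \<inter> W = {}"
  unfolding bll_def using walk_out by fast

lemma walk_restrict:
  assumes "(v, u) \<in> {(x, y). E x y} ^^ k" "k \<le> j"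
  shows "(v, u) \<in> {(x, y). E x y \<and> x \<in> bll E v (Suc j) \<and> y \<in> bll E v (Suc j)} ^^ k"
  using assms
proof (induction k arbitrary: u)
  case 0 then show ?case by simp
next
  case (Suc k)
  then obtain w where w: "(v, w) \<in> {(x, y). E x y} ^^ k" "E w u" by auto
  have "w \<in> bll E v (Suc j)" unfolding bll_def using w(1) Suc.prems(2) by (auto intro!: exI[of _ k])
  moreover have "u \<in> bll E v (Suc j)" unfolding bll_def using Suc.prems by (auto intro!: exI[of _ "Suc k"])
  ultimately show ?case using Suc w by auto
qed

lemma bll_growth:
  assumes sg: "subgraph V' E' V E" and v: "v \<in> V'" and g: "graph V E"
  shows "card (bll E' v (Suc j)) \<le> growth V E j"
proof -
  let ?B = "bll E' v (Suc j)"
  define E'' where "E'' = (\<lambda>x y. E' x y \<and> x \<in> ?B \<and> y \<in> ?B)"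
  have gV': "graph V' E'" using sg unfolding subgraph_def by auto
  have Bsub: "?B \<subseteq> V'" using bll_sub[OF gV' v] .
  have finV': "finite V'" using gV' unfolding graph_def by auto
  have "graph ?B E''" unfolding graph_def E''_def using gV' Bsub finV'
    by (auto simp: graph_def intro: finite_subset)
  moreover have "?B \<subseteq> V" using Bsub sg unfolding subgraph_def by auto
  moreover have "\<forall>x y. E'' x y \<longrightarrow> E x y" using sg unfolding subgraph_def E''_def by auto
  ultimately have sub: "subgraph ?B E'' V E" unfolding subgraph_def by auto
  have "v \<in> ?B" unfolding bll_def by force
  moreover have "\<forall>u\<in>?B. dist_le E'' v u j"
  proof
    fix u assume "u \<in> ?B"
    then obtain k where "k < Suc j" "(v, u) \<in> {(x, y). E' x y} ^^ k" unfolding bll_def by auto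
    then show "dist_le E'' v u j" unfolding dist_le_def E''_def
      using walk_restrict[where v=v and u=u and E=E' and k=k and j=j] by (auto intro!: exI[of _ k])
  qed
  ultimately have rad: "radius_le ?B E'' j" unfolding radius_le_def by blast
  let ?S = "insert 0 {card V' | V' E'. subgraph V' E' V E \<and> radius_le V' E' j}"
  have "?S \<subseteq> {..card V}"
  proof
    fix x assume "x \<in> ?S"
    then have "x = 0 \<or> (\<exists>V1 E1. x = card V1 \<and> subgraph V1 E1 V E)" by simp blast
    moreover have "finite V" using g unfolding graph_def by blast
    ultimately show "x \<in> {..card V}"
    proof (elim disjE exE conjE)
      fix V1 E1 assume "finite V" "x = card V1" "subgraph V1 E1 V E"
      then show ?thesis unfolding subgraph_def using card_mono[of V V1] by simp
    qed simp
  qed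
  then have "finite ?S" by (rule finite_subset) simp
  moreover have "card ?B \<in> ?S" using sub rad by blast
  ultimately show ?thesis unfolding growth_def by (rule Max_ge)
qed


lemma closedset_Un: "closedset E A \<Longrightarrow> closedset E B \<Longrightarrow> closedset E (A \<union> B)"
  unfolding closedset_def by blast

lemma main_sep:
  fixes V :: "'a set" and E :: "'a \<Rightarrow> 'a \<Rightarrow> bool" and c :: real
  assumes g: "graph V E" and c: "c \<ge> 1"
    and gr: "\<forall>r::nat. r \<ge> 1 \<longrightarrow> real (growth V E r) \<le> c * real r"
    and sg: "subgraph V' E' V E"
  shows "\<exists>A B. separation V' E' A B \<and> balanced (1 - 1 / (4 * c)) V' A B \<and> real (card (A \<inter> B)) < 2 * c"
proof -
  have gV': "graph V' E'" using sg unfolding subgraph_def by auto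
  have finV': "finite V'" using gV' unfolding graph_def by auto
  define n where "n = card V'"
  define thr where "thr = real n / (4 * c)"
  define \<alpha> where "\<alpha> = 1 - 1 / (4 * c)"
  have c4: "1 / (4 * c) \<le> 1/4" using c by (simp add: field_simps)
  have thr_le: "thr \<le> \<alpha> * real n"
  proof -
    have "thr = real n * (1 / (4 * c))" unfolding thr_def by simp
    also have "\<dots> \<le> real n * (1 - 1 / (4 * c))" using c4 by (intro mult_left_mono) auto
    finally show ?thesis unfolding \<alpha>_def by (simp add: mult.commute)
  qed
  have half_le: "real n / 2 \<le> \<alpha> * real n"
  proof -
    have "real n / 2 = real n * (1/2)" by simp
    also have "\<dots> \<le> real n * (1 - 1 / (4 * c))" using c4 by (intro mult_left_mono) auto
    finally show ?thesis unfolding \<alpha>_def by (simp add: mult.commute)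
  qed
  have cthr: "2 * c * thr = real n / 2" unfolding thr_def using c by (simp add: field_simps)
  show ?thesis
  proof (cases "n = 0")
    case True
    then have "V' = {}" using finV' unfolding n_def by simp
    then show ?thesis using c unfolding separation_def balanced_def by (intro exI[of _ "{}"]) auto
  next
    case False
    then have npos: "n > 0" by simp
    have thrpos: "thr > 0" unfolding thr_def using npos c by simp
    define WW where "WW = {W. W \<subseteq> V' \<and> closedset E' W \<and> real (card W) < thr}"
    have "WW \<subseteq> Pow V'" unfolding WW_def by auto
    then have finWW: "finite WW" using finV' by (meson finite_Pow_iff finite_subset)
    have "{} \<in> WW" unfolding WW_def closedset_def using thrpos by simp
    define M where "M = Max (card ` WW)"
    have "M \<in> card ` WW" unfolding M_def using finWW \<open>{} \<in> WW\<close> by (intro Max_in) auto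
    then obtain W where W: "W \<in> WW" "card W = M" by auto
    have Wmax: "\<And>W'. W' \<in> WW \<Longrightarrow> card W' \<le> card W"
      using W finWW unfolding M_def by auto
    have WV: "W \<subseteq> V'" and Wc: "closedset E' W" and Wthr: "real (card W) < thr"
      using W unfolding WW_def by auto
    have "thr < real n" unfolding thr_def using npos c by (simp add: field_simps)
    then have "W \<noteq> V'" using Wthr unfolding n_def by auto
    then obtain v where v: "v \<in> V'" "v \<notin> W" using WV by blast
    define b where "b = bll E' v"
    define h where "h = (\<lambda>j. card W + card (b j))"
    have finW: "finite W" using WV finV' finite_subset by blast
    have bsub: "\<And>j. b j \<subseteq> V'" unfolding b_def using bll_sub[OF gV' v(1)] .
    have finb: "\<And>j. finite (b j)" using bsub finV' finite_subset by blast
    have bdisj: "\<And>j. b j \<inter> W = {}" unfolding b_def using bll_disj[OF Wc v(2)] .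
    have hcard: "\<And>j. card (W \<union> b j) = h j" unfolding h_def
      using finW finb bdisj by (subst card_Un_disjoint) auto
    have bmono: "\<And>j j'. j \<le> j' \<Longrightarrow> b j \<subseteq> b j'" unfolding b_def by (rule bll_mono)
    have hmono: "\<And>j j'. j \<le> j' \<Longrightarrow> h j \<le> h j'" unfolding h_def using bmono finb
      by (simp add: card_mono)
    have hle: "\<And>j. h j \<le> n" unfolding n_def using hcard WV bsub finV'
      by (metis Un_subset_iff card_mono)
    have bgrow: "\<And>j. j \<ge> 1 \<Longrightarrow> real (card (b (Suc j))) \<le> c * real j"
    proof -
      fix j :: nat assume "j \<ge> 1"
      have "card (b (Suc j)) \<le> growth V E j" unfolding b_def using bll_growth[OF sg v(1) g] .
      then show "real (card (b (Suc j))) \<le> c * real j" using gr \<open>j \<ge> 1\<close> by (meson of_nat_le_iff order_trans)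
    qed
    have b1: "b (Suc 0) = {v}" unfolding b_def by (rule bll_1)
    have b0: "b 0 = {}" unfolding b_def by (rule bll_0)
    have vb: "\<And>j. j \<ge> 1 \<Longrightarrow> v \<in> b j"
    proof -
      fix j :: nat assume "j \<ge> 1"
      then have "b (Suc 0) \<subseteq> b j" using bmono by simp
      then show "v \<in> b j" using b1 by simp
    qed
    have stab: "\<And>j. j \<ge> 1 \<Longrightarrow> b (Suc j) = b j \<Longrightarrow> real (h j) \<ge> thr"
    proof (rule ccontr)
      fix j :: nat assume j: "j \<ge> 1" "b (Suc j) = b j" "\<not> thr \<le> real (h j)"
      have "closedset E' (b j)" unfolding b_def using bll_closed[OF gV'] j(2) unfolding b_def by blast
      then have "W \<union> b j \<in> WW" unfolding WW_def using Wc closedset_Un WV bsub hcard j(3) by auto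
      then have "card (W \<union> b j) \<le> card W" by (rule Wmax)
      moreover have "card (b j) \<ge> 1" using vb[OF j(1)] finb
        by (metis One_nat_def Suc_leI card_gt_0_iff empty_iff)
      ultimately show False using hcard unfolding h_def by auto
    qed
    have inc: "\<And>j. real (h j) < thr \<Longrightarrow> j \<le> card (b j)"
    proof -
      fix j show "real (h j) < thr \<Longrightarrow> j \<le> card (b j)"
      proof (induction j)
        case 0 then show ?case by simp
      next
        case (Suc j)
        have hj: "real (h j) < thr" using Suc.prems hmono[of j "Suc j"] by (meson le_SucI order_le_less_trans of_nat_le_iff order_refl)
        show ?case
        proof (cases "j = 0")
          case True then show ?thesis using b1 by simp
        next
          case False
          then have "b (Suc j) \<noteq> b j" using stab[of j] hj by auto
          moreover have "b j \<subseteq> b (Suc j)" using bmono by simp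
          ultimately have "card (b j) < card (b (Suc j))" using finb[of "Suc j"] by (intro psubset_card_mono) auto
          then show ?thesis using Suc.IH[OF hj] by simp
        qed
      qed
    qed
    have ex: "thr \<le> real (h (Suc n))"
    proof (rule ccontr)
      assume "\<not> thr \<le> real (h (Suc n))"
      then have "Suc n \<le> card (b (Suc n))" using inc by simp
      moreover have "card (b (Suc n)) \<le> n" unfolding n_def using bsub finV' by (simp add: card_mono)
      ultimately show False by simp
    qed
    define p where "p = (LEAST j. thr \<le> real (h j))"
    have hp: "thr \<le> real (h p)" unfolding p_def using ex by (rule LeastI)
    have p1: "p \<ge> 1"
    proof (rule ccontr)
      assume "\<not> p \<ge> 1" then have "p = 0" by simp
      then show False using hp Wthr b0 unfolding h_def by simp
    qed
    have hp1: "real (h (p - 1)) < thr"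
    proof -
      have "p - 1 < p" using p1 by simp
      then have "\<not> thr \<le> real (h (p - 1))" unfolding p_def by (rule not_less_Least)
      then show ?thesis by simp
    qed
    have p1b: "p - 1 \<le> card (b (p - 1))" using inc[OF hp1] .
    have layer: "\<And>i. card (b (Suc i)) = card (b i) + card (b (Suc i) - b i)"
      using finb bmono by (metis card_Diff_subset card_mono le_add_diff_inverse le_SucI order_refl)
    obtain i where i: "p - 1 \<le> i" "p = 1 \<and> i = 0 \<or> p \<ge> 2 \<and> i \<le> 2 * p - 3"
      "real (card (b (Suc i) - b i)) < 2 * c"
    proof (cases "p = 1")
      case True
      then show ?thesis using that[of 0] b0 b1 c by simp
    next
      case False
      then have p2: "p \<ge> 2" using p1 by simp
      show ?thesis
      proof (rule ccontr)
        assume nex: "\<not> ?thesis"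
        have big: "\<And>i. p - 1 \<le> i \<Longrightarrow> i \<le> 2 * p - 3 \<Longrightarrow> real (card (b (Suc i) - b i)) \<ge> 2 * c"
          using that p2 nex by (meson linorder_not_le)
        have tel: "\<And>m. m \<le> p - 1 \<Longrightarrow> real (card (b (p - 1 + m))) \<ge> 2 * c * real m"
        proof -
          fix m show "m \<le> p - 1 \<Longrightarrow> real (card (b (p - 1 + m))) \<ge> 2 * c * real m"
          proof (induction m)
            case 0 then show ?case by simp
          next
            case (Suc m)
            have "real (card (b (Suc (p - 1 + m)))) = real (card (b (p - 1 + m))) + real (card (b (Suc (p - 1 + m)) - b (p - 1 + m)))"
              using layer by simp
            moreover have "real (card (b (Suc (p - 1 + m)) - b (p - 1 + m))) \<ge> 2 * c"
              using big[of "p - 1 + m"] Suc.prems p2 by simp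
            moreover have "real (card (b (p - 1 + m))) \<ge> 2 * c * real m" using Suc by simp
            ultimately show ?case by (simp add: algebra_simps)
          qed
        qed
        have "real (card (b (p - 1 + (p - 1)))) \<ge> 2 * c * real (p - 1)" using tel by simp
        moreover have "p - 1 + (p - 1) = Suc (2 * p - 3)" using p2 by simp
        moreover have "real (card (b (Suc (2 * p - 3)))) \<le> c * real (2 * p - 3)" by (rule bgrow) (use p2 in simp)
        moreover have "2 * p - 3 < 2 * (p - 1)" using p2 by simp
        then have "real (2 * p - 3) < 2 * real (p - 1)" by (metis of_nat_less_iff of_nat_mult of_nat_numeral)
        then have "c * real (2 * p - 3) < c * (2 * real (p - 1))" using c by (intro mult_strict_left_mono) auto
        ultimately have "2 * c * real (p - 1) < 2 * c * real (p - 1)"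
          by (simp add: algebra_simps)
        then show False by simp
      qed
    qed
    define A where "A = W \<union> b (Suc i)"
    define B where "B = V' - (W \<union> b i)"
    have bi: "b i \<subseteq> b (Suc i)" using bmono by simp
    have AB: "A \<inter> B = b (Suc i) - b i" unfolding A_def B_def using bdisj bsub bi by blast
    have AmB: "A - B = W \<union> b i" unfolding A_def B_def using WV bsub bi by blast
    have BmA: "B - A = V' - (W \<union> b (Suc i))" unfolding A_def B_def using bi by blast
    have sep: "separation V' E' A B"
      unfolding separation_def
    proof (intro conjI allI impI)
      show "A \<union> B = V'" unfolding A_def B_def using WV bsub bi by blast
    next
      fix x y assume e: "E' x y"
      show "\<not> (x \<in> A - B \<and> y \<in> B - A)"
      proof
        assume xy: "x \<in> A - B \<and> y \<in> B - A"
        then have x: "x \<in> W \<union> b i" and y: "y \<notin> W \<union> b (Suc i)" using AmB BmA by auto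
        show False
        proof (cases "x \<in> W")
          case True then show False using Wc e y unfolding closedset_def by blast
        next
          case False then have "x \<in> b i" using x by blast
          then have "y \<in> b (Suc i)" unfolding b_def using bll_step[where E=E' and u=x and w=y] e by blast
          then show False using y by blast
        qed
      qed
    qed
    have c1: "real (card (A - B)) \<le> \<alpha> * real n"
    proof -
      have cA: "card (A - B) = h i" using AmB hcard by simp
      show ?thesis
      proof (cases "i = p - 1")
        case True then show ?thesis using cA hp1 thr_le by simp
      next
        case False
        then have ip: "i \<ge> p" "p \<ge> 2" "i \<le> 2 * p - 3" using i by auto
        have "real (card (b (Suc (i - 1)))) \<le> c * real (i - 1)" by (rule bgrow) (use ip in simp)
        moreover have "Suc (i - 1) = i" using ip by simp
        ultimately have bi_le: "real (card (b i)) \<le> c * real (i - 1)" by simp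
        have "real (i - 1) \<le> 2 * real (p - 1) - 2" using ip by linarith
        then have "c * real (i - 1) \<le> c * (2 * real (p - 1) - 2)" using c by (intro mult_left_mono) auto
        moreover have "real (p - 1) < thr - real (card W)" using p1b hp1 unfolding h_def by simp
        then have "c * real (p - 1) < c * (thr - real (card W))" using c by (intro mult_strict_left_mono) auto
        ultimately have "real (card (b i)) + real (card W) < 2 * c * thr - (2 * c - 1) * real (card W) - 2 * c"
          using bi_le by (simp add: algebra_simps)
        moreover have "(2 * c - 1) * real (card W) \<ge> 0" using c by simp
        ultimately have "real (card (b i)) + real (card W) < real n / 2" using cthr c by linarith
        then have "real (h i) < real n / 2" unfolding h_def by simp
        then show ?thesis using cA half_le by linarith
      qed
    qed
    have c2: "real (card (B - A)) \<le> \<alpha> * real n"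
    proof -
      have "card (B - A) = n - h (Suc i)" unfolding n_def using BmA hcard WV bsub finV'
        by (metis Un_subset_iff card_Diff_subset finite_subset)
      moreover have "h (Suc i) \<le> n" by (rule hle)
      moreover have "thr \<le> real (h (Suc i))" 
      proof -
        have "p \<le> Suc i" using i(1) by simp
        then have "h p \<le> h (Suc i)" by (rule hmono)
        then show ?thesis using hp by (meson of_nat_le_iff order_trans)
      qed
      ultimately have "real (card (B - A)) \<le> real n - thr" by simp
      moreover have "real n - thr = \<alpha> * real n" unfolding \<alpha>_def thr_def using c by (simp add: field_simps)
      ultimately show ?thesis by simp
    qed
    show ?thesis
      using sep c1 c2 AB i(3) unfolding balanced_def \<alpha>_def n_def by (intro exI[of _ A] exI[of _ B]) auto
  qed
qed

lemma int_nat_m1: "(2::int) \<le> x \<Longrightarrow> int (nat x - 1) = x - 1"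
  by simp

theorem lemma6:
  fixes V :: "'a set" and E :: "'a \<Rightarrow> 'a \<Rightarrow> bool" and c :: real
  assumes "graph V E"
    and "c \<ge> 1"
    and "\<forall>r::nat. r \<ge> 1 \<longrightarrow> real (growth V E r) \<le> c * real r"
  shows "real (sep_num (1 - 1 / (4 * c)) V E) < 2 * c"
proof -
  define s where "s = nat (ceiling (2 * c)) - 1"
  have cg: "ceiling (2 * c) \<ge> 2" 
  proof -
    have "real_of_int 1 < 2 * c" using assms(2) by simp
    then have "1 < ceiling (2 * c)" by (meson ceiling_correct less_ceiling_iff)
    then show ?thesis by simp
  qed
  have s_lt: "real s < 2 * c"
  proof -
    have "int s = ceiling (2 * c) - 1" unfolding s_def using int_nat_m1[OF cg] .
    then have "real s = real_of_int (ceiling (2 * c)) - 1" by (metis of_int_1 of_int_diff of_int_of_nat_eq)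
    moreover have "real_of_int (ceiling (2 * c)) < 2 * c + 1" using ceiling_correct[of "2 * c"] by linarith
    ultimately show ?thesis by simp
  qed
  have hprop: "\<forall>V' E'. subgraph V' E' V E \<longrightarrow>
      (\<exists>A B. separation V' E' A B \<and> balanced (1 - 1 / (4 * c)) V' A B \<and> card (A \<inter> B) \<le> s)"
  proof (intro allI impI)
    fix V' E' assume "subgraph V' E' V E"
    then obtain A B where AB: "separation V' E' A B" "balanced (1 - 1 / (4 * c)) V' A B"
      "real (card (A \<inter> B)) < 2 * c" using main_sep[OF assms] by blast
    have "real (card (A \<inter> B)) < real_of_int (ceiling (2 * c))"
      using AB(3) le_of_int_ceiling order_less_le_trans by blast
    then have "int (card (A \<inter> B)) < ceiling (2 * c)" by linarith
    then have "card (A \<inter> B) \<le> s" unfolding s_def by linarith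
    then show "\<exists>A B. separation V' E' A B \<and> balanced (1 - 1 / (4 * c)) V' A B \<and> card (A \<inter> B) \<le> s"
      using AB by blast
  qed
  have "sep_num (1 - 1 / (4 * c)) V E \<le> s" unfolding sep_num_def by (rule Least_le) (rule hprop)
  then show ?thesis using s_lt by (meson of_nat_le_iff order_le_less_trans)
qed

end
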